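(* Let $(C_1,\sigma_1)$ and $(C_2,\sigma_2)$ be signed cycles and $(P,\pi)=(C_1,\sigma_1)\,\square\,(C_2,\sigma_2)$. Then $\chi_s(P,\pi)$ depends only on the types of the two cycles and is symmetric in them, given as follows: $BC_{even}\square BC_{even}$: $2$; $BC_{even}\square BC_{odd}$: $3$; $BC_{even}\square UC_{even}$: $4$; $BC_{even}\square UC_{odd}$: $3$; $BC_{odd}\square BC_{odd}$: $3$; $BC_{odd}\square UC_{even}$: $5$; $BC_{odd}\square UC_{odd}$: $5$; $UC_{even}\square UC_{even}$: $4$; $UC_{even}\square UC_{odd}$: $5$; $UC_{odd}\square UC_{odd}$: $3$.
   Context: A signed graph $(G,\sigma)$ is a simple loopless undirected graph with a signature $\sigma:E(G)\to\{+1,-1\}$. Switching a vertex negates the signs of its incident edges; two signatures are equivalent if one is obtained from the other by switching a set of vertices. A homomorphism of $(G,\sigma)$ to $(H,\pi)$ is a graph homomorphism $\varphi:G\to H$ for which there is a signature $\sigma'$ equivalent to $\sigma$ with $\pi(\varphi(u)\varphi(v))=\sigma'(uv)$ for every edge $uv$; $\chi_s(G,\sigma)$ is the smallest order of a signed graph to which $(G,\sigma)$ admits a homomorphism. A signed cycle (cycle of length at least $3$) is balanced if it has an even number of negative edges, unbalanced otherwise; $BC_{even}$, $BC_{odd}$, $UC_{even}$, $UC_{odd}$ denote balanced cycles of even length, balanced of odd length, unbalanced of even length, unbalanced of odd length. The Cartesian product $(G,\sigma)\,\square\,(H,\pi)$ is the signed graph on $G\,\square\,H$ where $(u,v_1)(u,v_2)$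 has sign $\pi(v_1v_2)$ and $(u_1,v)(u_2,v)$ has sign $\sigma(u_1u_2)$. *)

theory Defs
  imports Main
begin

text \<open>A signed graph is given by a finite vertex set V, a set E of edges
  (two-element subsets of V: simple, loopless, undirected) and the set N \<subseteq> E
  of negative edges (the signature is -1 exactly on N, +1 on E - N).\<close>

definition signed_graph :: "'a set \<Rightarrow> 'a set set \<Rightarrow> 'a set set \<Rightarrow> bool" where
  "signed_graph V E N \<longleftrightarrow> finite V \<and>
     E \<subseteq> {{u, v} | u v. u \<in> V \<and> v \<in> V \<and> u \<noteq> v} \<and> N \<subseteq> E"

definition switch :: "'a set set \<Rightarrow> 'a set set \<Rightarrow> 'a set \<Rightarrow> 'a set set" where
  "switch E N X = {e \<in> E. (e \<in> N) \<noteq> (card (e \<inter> X) = 1)}"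

definition signed_hom ::
  "'a set \<Rightarrow> 'a set set \<Rightarrow> 'a set set \<Rightarrow> 'b set \<Rightarrow> 'b set set \<Rightarrow> 'b set set \<Rightarrow> ('a \<Rightarrow> 'b) \<Rightarrow> bool" where
  "signed_hom V E N W F M \<phi> \<longleftrightarrow>
     (\<forall>v\<in>V. \<phi> v \<in> W) \<and> (\<forall>e\<in>E. \<phi> ` e \<in> F) \<and>
     (\<exists>X \<subseteq> V. \<forall>e\<in>E. (\<phi> ` e \<in> M \<longleftrightarrow> e \<in> switch E N X))"

text \<open>Signed chromatic number: the smallest order of a signed graph to which
  (V,E,N) maps; up to isomorphism the target may be taken on vertex set {0..<n}.\<close>
definition chi_s :: "'a set \<Rightarrow> 'a set set \<Rightarrow> 'a set set \<Rightarrow> nat" where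
  "chi_s V E N = (LEAST n. \<exists>F M (\<phi> :: 'a \<Rightarrow> nat).
      signed_graph {0..<n} F M \<and> signed_hom V E N {0..<n} F M \<phi>)"

definition is_cycle :: "'a set \<Rightarrow> 'a set set \<Rightarrow> nat \<Rightarrow> bool" where
  "is_cycle V E n \<longleftrightarrow> n \<ge> 3 \<and>
     (\<exists>f. bij_betw f {..<n} V \<and> E = {{f i, f (Suc i mod n)} | i. i < n})"

definition signed_cycle :: "'a set \<Rightarrow> 'a set set \<Rightarrow> 'a set set \<Rightarrow> bool" where
  "signed_cycle V E N \<longleftrightarrow> (\<exists>n. is_cycle V E n) \<and> N \<subseteq> E"

datatype ctype = BC_even | BC_odd | UC_even | UC_odd

text \<open>Type of a signed cycle: balanced iff even number of negative edges;
  parity of the length = parity of the number of vertices.\<close>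
definition cycle_type :: "'a set \<Rightarrow> 'a set set \<Rightarrow> ctype" where
  "cycle_type V N =
     (if even (card N) then (if even (card V) then BC_even else BC_odd)
      else (if even (card V) then UC_even else UC_odd))"

definition prod_V :: "'a set \<Rightarrow> 'b set \<Rightarrow> ('a \<times> 'b) set" where
  "prod_V V1 V2 = V1 \<times> V2"

definition prod_E :: "'a set \<Rightarrow> 'a set set \<Rightarrow> 'b set \<Rightarrow> 'b set set \<Rightarrow> ('a \<times> 'b) set set" where
  "prod_E V1 E1 V2 E2 =
     {{(u, v1), (u, v2)} | u v1 v2. u \<in> V1 \<and> {v1, v2} \<in> E2} \<union>
     {{(u1, v), (u2, v)} | u1 u2 v. {u1, u2} \<in> E1 \<and> v \<in> V2}"

definition prod_N :: "'a set \<Rightarrow> 'a set set \<Rightarrow> 'b set \<Rightarrow> 'b set set \<Rightarrow> ('a \<times> 'b) set set" where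
  "prod_N V1 N1 V2 N2 =
     {{(u, v1), (u, v2)} | u v1 v2. u \<in> V1 \<and> {v1, v2} \<in> N2} \<union>
     {{(u1, v), (u2, v)} | u1 u2 v. {u1, u2} \<in> N1 \<and> v \<in> V2}"

fun chi_table :: "ctype \<Rightarrow> ctype \<Rightarrow> nat" where
  "chi_table BC_even BC_even = 2"
| "chi_table BC_even BC_odd = 3"
| "chi_table BC_even UC_even = 4"
| "chi_table BC_even UC_odd = 3"
| "chi_table BC_odd BC_even = 3"
| "chi_table BC_odd BC_odd = 3"
| "chi_table BC_odd UC_even = 5"
| "chi_table BC_odd UC_odd = 5"
| "chi_table UC_even BC_even = 4"
| "chi_table UC_even BC_odd = 5"
| "chi_table UC_even UC_even = 4"
| "chi_table UC_even UC_odd = 5"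
| "chi_table UC_odd BC_even = 3"
| "chi_table UC_odd BC_odd = 5"
| "chi_table UC_odd UC_even = 5"
| "chi_table UC_odd UC_odd = 3"

end

theory Submission
  imports Defs
begin


definition th :: "(nat \<Rightarrow> nat \<Rightarrow> bool) \<Rightarrow> nat \<Rightarrow> nat \<Rightarrow> bool" where
  "th pm x y = (if x < y then (if x = 2 \<and> y = 3 then pm 1 3 else pm x y)
               else (if x = 3 \<and> y = 2 then pm 1 2 else ((pm 1 2 \<noteq> pm 1 3) \<noteq> pm 2 3)))"

lemma lt4: "(x::nat) < 4 \<longleftrightarrow> x = 0 \<or> x = 1 \<or> x = 2 \<or> x = 3" by auto

lemma th_sym:
  assumes sym: "\<And>a b. pm a b = pm b a" and "x < 4" "y < 4" "x \<noteq> y"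
  shows "(th pm x y \<noteq> th pm y x) = (pm x y \<noteq> ((pm 1 2 \<noteq> pm 1 3) \<noteq> pm 2 3))"
proof -
  have s: "pm (Suc 0) 0 = pm 0 (Suc 0)" "pm 2 0 = pm 0 2" "pm 3 0 = pm 0 3" "pm 2 (Suc 0) = pm (Suc 0) 2" "pm 3 (Suc 0) = pm (Suc 0) 3" "pm 3 2 = pm 2 3"
    using sym by auto
  show ?thesis using assms(2-4) unfolding lt4 th_def
    apply (elim disjE) 
    apply (simp_all add: s)
    apply argo+
    done
qed

lemma square_dist:
  assumes sym: "\<And>a b. pm a b = pm b a" and "a < 4" "b < 4" "c < 4" "d < 4"
    and "a \<noteq> b" "b \<noteq> c" "c \<noteq> d" "d \<noteq> a" "a \<noteq> c" "b \<noteq> d"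
    and bal: "(pm a b \<noteq> pm b c) = (pm d c \<noteq> pm a d)"
  shows "(pm a b \<noteq> pm a d) = ((th pm a b \<noteq> th pm d c) \<noteq> (th pm a d \<noteq> th pm b c))"
proof -
  have s: "pm (Suc 0) 0 = pm 0 (Suc 0)" "pm 2 0 = pm 0 2" "pm 3 0 = pm 0 3" "pm 2 (Suc 0) = pm (Suc 0) 2" "pm 3 (Suc 0) = pm (Suc 0) 3" "pm 3 2 = pm 2 3"
    using sym by auto
  show ?thesis using assms(2-12) unfolding lt4 th_def
    apply (elim disjE) 
    apply (simp_all add: s)
    apply argo+
    done
qed

lemma square:
  assumes sym: "\<And>a b. pm a b = pm b a" and "a < 4" "b < 4" "c < 4" "d < 4"
    and "a \<noteq> b" "b \<noteq> c" "c \<noteq> d" "d \<noteq> a"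
    and bal: "(pm a b \<noteq> pm b c) = (pm d c \<noteq> pm a d)"
  shows "(pm a b \<noteq> pm a d) = ((th pm a b \<noteq> th pm d c) \<noteq> (th pm a d \<noteq> th pm b c))"
proof (cases "a = c")
  case True
  then show ?thesis using th_sym[of pm, OF sym, of a b] th_sym[of pm, OF sym, of a d] assms(2-9) sym[of b a] sym[of d a]
    by auto
next
  case False
  show ?thesis
  proof (cases "b = d")
    case True then show ?thesis by auto
  next
    case False
    then show ?thesis using square_dist[of pm a b c d] assms \<open>a \<noteq> c\<close> by blast
  qed
qed

definition ihom :: "nat \<Rightarrow> nat \<Rightarrow> (nat \<Rightarrow> bool) \<Rightarrow> (nat \<Rightarrow> bool) \<Rightarrow> nat \<Rightarrow> (nat \<Rightarrow> nat \<Rightarrow> nat) \<Rightarrow> (nat \<Rightarrow> nat \<Rightarrow> bool) \<Rightarrow> (nat \<Rightarrow> nat \<Rightarrow> bool) \<Rightarrow> bool" where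
  "ihom m n s1 s2 k c x pm \<longleftrightarrow> (\<forall>a b. pm a b = pm b a) \<and>
    (\<forall>i<m. \<forall>j<n. c i j < k \<and> c i j \<noteq> c (Suc i mod m) j \<and> c i j \<noteq> c i (Suc j mod n) \<and>
       pm (c i j) (c (Suc i mod m) j) = (s1 i \<noteq> (x i j \<noteq> x (Suc i mod m) j)) \<and>
       pm (c i j) (c i (Suc j mod n)) = (s2 j \<noteq> (x i j \<noteq> x i (Suc j mod n))))"

lemma ihom_transpose:
  "ihom m n s1 s2 k c x pm \<Longrightarrow> ihom n m s2 s1 k (\<lambda>j i. c i j) (\<lambda>j i. x i j) pm"
  unfolding ihom_def by auto

lemma sum_rot:
  assumes "0 < n"
  shows "(\<Sum>j<n. f (Suc j mod n)) = (\<Sum>j<n. (f j :: nat))"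
proof -
  obtain k where n: "n = Suc k" using assms by (cases n) auto
  have "(\<Sum>j<Suc k. f (Suc j mod Suc k)) = (\<Sum>j<k. f (Suc j mod Suc k)) + f (Suc k mod Suc k)"
    by simp
  also have "(\<Sum>j<k. f (Suc j mod Suc k)) = (\<Sum>j<k. f (Suc j))"
    by (rule sum.cong) auto
  also have "(\<Sum>j<Suc k. f j) = f 0 + (\<Sum>j<k. f (Suc j))"
    by (rule sum.lessThan_Suc_shift)
  ultimately show ?thesis using n by simp
qed

lemma ob_xor: "of_bool (a \<noteq> b) + 2 * of_bool (a \<and> b) = of_bool a + (of_bool b :: nat)"
  by (cases a; cases b) auto

lemma even_cyc:
  fixes g :: "nat \<Rightarrow> bool"
  assumes "0 < m"
  shows "even (\<Sum>i<m. of_bool (g i \<noteq> g (Suc i mod m)) :: nat)"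
proof -
  have "(\<Sum>i<m. of_bool (g i \<noteq> g (Suc i mod m)) :: nat) + 2 * (\<Sum>i<m. of_bool (g i \<and> g (Suc i mod m)))
      = (\<Sum>i<m. of_bool (g i) + of_bool (g (Suc i mod m)))"
    unfolding sum_distrib_left sum.distrib[symmetric] by (rule sum.cong) (auto simp: ob_xor)
  also have "\<dots> = 2 * (\<Sum>i<m. of_bool (g i))"
    using sum_rot[OF assms, of "\<lambda>i. of_bool (g i)"] by (simp add: sum.distrib)
  finally show ?thesis by presburger
qed

lemma L2:
  assumes "ihom m n s1 s2 k c x pm" "m \<ge> 3" "n > 0" "k \<le> 1"
  shows False
proof -
  have h: "\<forall>i<m. \<forall>j<n. c i j < k \<and> c i j \<noteq> c (Suc i mod m) j"
    using assms(1) unfolding ihom_def by auto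
  have "Suc 0 mod m = 1" using assms(2) by simp
  moreover have "c 0 0 < k \<and> c 0 0 \<noteq> c (Suc 0 mod m) 0" using h[rule_format, of 0 0] assms(2,3) by linarith
  moreover have "c 1 0 < k" using h[rule_format, of 1 0] assms(2,3) by linarith
  ultimately have "c 0 0 < k" "c 0 0 \<noteq> c 1 0" "c 1 0 < k" by auto
  then show False using assms(4) by linarith
qed

lemma L3:
  assumes "ihom m n s1 s2 k c x pm" "odd m" "n > 0" "k \<le> 2"
  shows False
proof -
  have m: "0 < m" using assms(2) by presburger
  have *: "\<And>i. i \<in> {..<m} \<Longrightarrow> (of_bool ((c i 0 = 1) \<noteq> (c (Suc i mod m) 0 = 1)) :: nat) = 1"
  proof -
    fix i assume "i \<in> {..<m}"
    then have "c i 0 < k" "c i 0 \<noteq> c (Suc i mod m) 0" "c (Suc i mod m) 0 < k"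
      using assms m unfolding ihom_def by auto
    then show "(of_bool ((c i 0 = 1) \<noteq> (c (Suc i mod m) 0 = 1)) :: nat) = 1" using assms(4) by auto
  qed
  have "(\<Sum>i<m. of_bool ((c i 0 = 1) \<noteq> (c (Suc i mod m) 0 = 1)) :: nat) = (\<Sum>i<m. 1)"
    using * by (rule sum.cong[OF refl])
  then have "even m" using even_cyc[OF m, of "\<lambda>i. c i 0 = 1"] by simp
  then show False using assms(2) by simp
qed


definition h3 :: "(nat \<Rightarrow> nat \<Rightarrow> bool) \<Rightarrow> nat \<Rightarrow> bool" where
  "h3 pm a = (if a = 1 then pm 0 1 \<noteq> ((pm 0 1 \<noteq> pm 0 2) \<noteq> pm 1 2)
              else if a = 2 then pm 0 2 \<noteq> ((pm 0 1 \<noteq> pm 0 2) \<noteq> pm 1 2) else False)"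

lemma three_pot:
  assumes sym: "\<And>a b. pm a b = pm b a" and "a < 3" "b < 3" "a \<noteq> b"
  shows "pm a b = ((h3 pm a \<noteq> h3 pm b) \<noteq> ((pm 0 1 \<noteq> pm 0 2) \<noteq> pm 1 2))"
proof -
  have s: "pm (Suc 0) 0 = pm 0 (Suc 0)" "pm 2 0 = pm 0 2" "pm 2 (Suc 0) = pm (Suc 0) 2"
    using sym by auto
  have "a = 0 \<or> a = 1 \<or> a = 2" "b = 0 \<or> b = 1 \<or> b = 2" using assms by auto
  then show ?thesis using assms(4) unfolding h3_def
    apply (elim disjE)
    apply (simp_all add: s)
    apply argo+
    done
qed

lemma L4:
  assumes "ihom m n s1 s2 k c x pm" "0 < m" "even n" "0 < n" "odd (\<Sum>j<n. of_bool (s2 j) :: nat)" "k \<le> 3"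
  shows False
proof -
  define \<kappa> where "\<kappa> = ((pm 0 1 \<noteq> pm 0 2) \<noteq> pm 1 2)"
  define g where "g j = (h3 pm (c 0 j) \<noteq> x 0 j)" for j
  have sym: "\<And>a b. pm a b = pm b a" using assms(1) unfolding ihom_def by auto
  have pt: "even (of_bool (s2 j) + of_bool (g j \<noteq> g (Suc j mod n)) + of_bool \<kappa> :: nat)" if "j \<in> {..<n}" for j
  proof -
    have h: "c 0 j < k" "c 0 (Suc j mod n) < k" "c 0 j \<noteq> c 0 (Suc j mod n)"
      "pm (c 0 j) (c 0 (Suc j mod n)) = (s2 j \<noteq> (x 0 j \<noteq> x 0 (Suc j mod n)))"
      using assms(1,2,4) that unfolding ihom_def by auto
    have "pm (c 0 j) (c 0 (Suc j mod n)) = ((h3 pm (c 0 j) \<noteq> h3 pm (c 0 (Suc j mod n))) \<noteq> \<kappa>)"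
      unfolding \<kappa>_def using h assms(6) by (intro three_pot[OF sym]) auto
    then have "s2 j = ((g j \<noteq> g (Suc j mod n)) \<noteq> \<kappa>)" using h(4) unfolding g_def by auto
    then show ?thesis by (cases "s2 j"; cases "g j \<noteq> g (Suc j mod n)"; cases \<kappa>) auto
  qed
  have "even (\<Sum>j<n. of_bool (s2 j) + of_bool (g j \<noteq> g (Suc j mod n)) + of_bool \<kappa> :: nat)"
    using pt by (intro dvd_sum) auto
  then have "even ((\<Sum>j<n. of_bool (s2 j)) + (\<Sum>j<n. of_bool (g j \<noteq> g (Suc j mod n))) + n * of_bool \<kappa> :: nat)"
    by (simp add: sum.distrib)
  moreover have "even (\<Sum>j<n. of_bool (g j \<noteq> g (Suc j mod n)) :: nat)" using even_cyc[OF assms(4)] by blast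
  ultimately show False using assms(3,5) by auto
qed

lemma xor6_even:
  assumes "(a \<noteq> b) = ((c \<noteq> d) \<noteq> (e \<noteq> f))"
  shows "even (of_bool a + of_bool b + of_bool c + of_bool d + of_bool e + of_bool f :: nat)"
  using assms by (cases a; cases b; cases c; cases d; cases e; cases f) auto

lemma xor3_even:
  assumes "a = (b \<noteq> (c \<noteq> d))"
  shows "even (of_bool a + of_bool b + of_bool c + of_bool d :: nat)"
  using assms by (cases a; cases b; cases c; cases d) auto

lemma ev_h1: "even ((a::nat) + b + c + c + d + d) \<Longrightarrow> even (a + b)" by presburger
lemma ev_h2: "even ((a::nat) + s + x + x) \<Longrightarrow> even (a + s)" by presburger
lemma ev_h3: "even ((a::nat) + b) \<Longrightarrow> even (a + s) \<Longrightarrow> even (b + t) \<Longrightarrow> even (s + t)" by presburger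

lemma L5:
  assumes "ihom m n s1 s2 k c x pm" "0 < m" "0 < n" "k \<le> 4"
    and odd: "odd (n * (\<Sum>i<m. of_bool (s1 i)) + m * (\<Sum>j<n. of_bool (s2 j)) :: nat)"
  shows False
proof -
  define ip where "ip i = Suc i mod m" for i
  define jp where "jp j = Suc j mod n" for j
  have sym: "\<And>a b. pm a b = pm b a" using assms(1) unfolding ihom_def by blast
  have hh: "\<forall>i<m. \<forall>j<n. c i j < k \<and> c i j \<noteq> c (Suc i mod m) j \<and> c i j \<noteq> c i (Suc j mod n) \<and>
       pm (c i j) (c (Suc i mod m) j) = (s1 i \<noteq> (x i j \<noteq> x (Suc i mod m) j)) \<and>
       pm (c i j) (c i (Suc j mod n)) = (s2 j \<noteq> (x i j \<noteq> x i (Suc j mod n)))"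
    using assms(1) unfolding ihom_def by blast
  have H: "c i j < 4 \<and> c i j \<noteq> c (ip i) j \<and> c i j \<noteq> c i (jp j) \<and>
       pm (c i j) (c (ip i) j) = (s1 i \<noteq> (x i j \<noteq> x (ip i) j)) \<and>
       pm (c i j) (c i (jp j)) = (s2 j \<noteq> (x i j \<noteq> x i (jp j)))" if "i < m" "j < n" for i j
  proof -
    have "c i j < k \<and> c i j \<noteq> c (ip i) j \<and> c i j \<noteq> c i (jp j) \<and>
       pm (c i j) (c (ip i) j) = (s1 i \<noteq> (x i j \<noteq> x (ip i) j)) \<and>
       pm (c i j) (c i (jp j)) = (s2 j \<noteq> (x i j \<noteq> x i (jp j)))"
      unfolding ip_def jp_def using hh that by blast
    then show ?thesis using assms(4) by linarith
  qed
  have H1: "c i j < 4" if "i < m" "j < n" for i j using H[OF that] by blast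
  have H2: "c i j \<noteq> c (ip i) j" if "i < m" "j < n" for i j using H[OF that] by blast
  have H3: "c i j \<noteq> c i (jp j)" if "i < m" "j < n" for i j using H[OF that] by blast
  have H4: "pm (c i j) (c (ip i) j) = (s1 i \<noteq> (x i j \<noteq> x (ip i) j))" if "i < m" "j < n" for i j
    using H[OF that] by (elim conjE)
  have H5: "pm (c i j) (c i (jp j)) = (s2 j \<noteq> (x i j \<noteq> x i (jp j)))" if "i < m" "j < n" for i j
    using H[OF that] by (elim conjE)
  have ipm: "i < m \<Longrightarrow> ip i < m" for i using assms(2) unfolding ip_def by simp
  have jpn: "j < n \<Longrightarrow> jp j < n" for j using assms(3) unfolding jp_def by simp
  define A :: "nat \<Rightarrow> nat \<Rightarrow> nat" where "A i j = of_bool (pm (c i j) (c (ip i) j))" for i j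
  define B :: "nat \<Rightarrow> nat \<Rightarrow> nat" where "B i j = of_bool (pm (c i j) (c i (jp j)))" for i j
  define C :: "nat \<Rightarrow> nat \<Rightarrow> nat" where "C i j = of_bool (th pm (c i j) (c (ip i) j))" for i j
  define D :: "nat \<Rightarrow> nat \<Rightarrow> nat" where "D i j = of_bool (th pm (c i j) (c i (jp j)))" for i j
  have pt: "even (A i j + B i j + C i j + C i (jp j) + D i j + D (ip i) j :: nat)"
    if "i < m" "j < n" for i j
  proof -
    have i2: "ip i < m" and j2: "jp j < n" using that ipm jpn by auto
    note q1 = H4[OF that] and q2 = H5[OF that] and q3 = H5[OF i2 that(2)] and q4 = H4[OF that(1) j2]
    have bal: "(pm (c i j) (c (ip i) j) \<noteq> pm (c (ip i) j) (c (ip i) (jp j))) =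
        (pm (c i (jp j)) (c (ip i) (jp j)) \<noteq> pm (c i j) (c i (jp j)))"
      unfolding q1 q2 q3 q4 by argo
    have l: "c i j < 4" "c (ip i) j < 4" "c (ip i) (jp j) < 4" "c i (jp j) < 4"
      using H1 that i2 j2 by auto
    have d: "c i j \<noteq> c (ip i) j" "c (ip i) j \<noteq> c (ip i) (jp j)" "c (ip i) (jp j) \<noteq> c i (jp j)" "c i (jp j) \<noteq> c i j"
      using H2[OF that] H3[OF i2 that(2)] H2[OF that(1) j2] H3[OF that] by auto
    have "(pm (c i j) (c (ip i) j) \<noteq> pm (c i j) (c i (jp j))) =
      ((th pm (c i j) (c (ip i) j) \<noteq> th pm (c i (jp j)) (c (ip i) (jp j))) \<noteq>
       (th pm (c i j) (c i (jp j)) \<noteq> th pm (c (ip i) j) (c (ip i) (jp j))))"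
      by (rule square[of pm, OF sym l d bal])
    then show ?thesis unfolding A_def B_def C_def D_def by (rule xor6_even)
  qed
  have "even (\<Sum>i<m. \<Sum>j<n. A i j + B i j + C i j + C i (jp j) + D i j + D (ip i) j :: nat)"
    using pt by (intro dvd_sum) auto
  then have e1: "even ((\<Sum>i<m. \<Sum>j<n. A i j) + (\<Sum>i<m. \<Sum>j<n. B i j) + (\<Sum>i<m. \<Sum>j<n. C i j)
     + (\<Sum>i<m. \<Sum>j<n. C i (jp j)) + (\<Sum>i<m. \<Sum>j<n. D i j) + (\<Sum>i<m. \<Sum>j<n. D (ip i) j))"
    by (simp only: sum.distrib)
  have r1: "(\<Sum>i<m. \<Sum>j<n. C i (jp j)) = (\<Sum>i<m. \<Sum>j<n. C i j)"
    unfolding jp_def using sum_rot[OF assms(3)] by simp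
  have r2: "(\<Sum>i<m. \<Sum>j<n. D (ip i) j) = (\<Sum>i<m. \<Sum>j<n. D i j)"
    unfolding ip_def using sum_rot[OF assms(2), of "\<lambda>i. \<Sum>j<n. D i j"] by simp
  have e2: "even ((\<Sum>i<m. \<Sum>j<n. A i j) + (\<Sum>i<m. \<Sum>j<n. B i j))"
    using e1 unfolding r1 r2 by (rule ev_h1)
  define X where "X i j = (of_bool (x i j) :: nat)" for i j
  have ptA: "even (A i j + of_bool (s1 i) + X i j + X (ip i) j)" if "i < m" "j < n" for i j
    unfolding A_def X_def using H4[OF that] by (rule xor3_even)
  have ptB: "even (B i j + of_bool (s2 j) + X i j + X i (jp j))" if "i < m" "j < n" for i j
    unfolding B_def X_def using H5[OF that] by (rule xor3_even)
  have "even (\<Sum>i<m. \<Sum>j<n. A i j + of_bool (s1 i) + X i j + X (ip i) j)"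
    using ptA by (intro dvd_sum) auto
  then have eA: "even ((\<Sum>i<m. \<Sum>j<n. A i j) + (\<Sum>i<m. \<Sum>j<n. (of_bool (s1 i) :: nat)) + (\<Sum>i<m. \<Sum>j<n. X i j)
     + (\<Sum>i<m. \<Sum>j<n. X (ip i) j))"
    by (simp only: sum.distrib)
  have "even (\<Sum>i<m. \<Sum>j<n. B i j + of_bool (s2 j) + X i j + X i (jp j))"
    using ptB by (intro dvd_sum) auto
  then have eB: "even ((\<Sum>i<m. \<Sum>j<n. B i j) + (\<Sum>i<m. \<Sum>j<n. (of_bool (s2 j) :: nat)) + (\<Sum>i<m. \<Sum>j<n. X i j)
     + (\<Sum>i<m. \<Sum>j<n. X i (jp j)))"
    by (simp only: sum.distrib)
  have r3: "(\<Sum>i<m. \<Sum>j<n. X (ip i) j) = (\<Sum>i<m. \<Sum>j<n. X i j)"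
    unfolding ip_def using sum_rot[OF assms(2), of "\<lambda>i. \<Sum>j<n. X i j"] by simp
  have r4: "(\<Sum>i<m. \<Sum>j<n. X i (jp j)) = (\<Sum>i<m. \<Sum>j<n. X i j)"
    unfolding jp_def using sum_rot[OF assms(3)] by simp
  have r5: "(\<Sum>i<m. \<Sum>j<n. (of_bool (s1 i) :: nat)) = n * (\<Sum>i<m. of_bool (s1 i))"
    by (simp add: sum_distrib_left mult.commute)
  have r6: "(\<Sum>i<m. \<Sum>j<n. (of_bool (s2 j) :: nat)) = m * (\<Sum>j<n. of_bool (s2 j))"
    by simp
  have eA': "even ((\<Sum>i<m. \<Sum>j<n. A i j) + n * (\<Sum>i<m. of_bool (s1 i)))"
    using eA unfolding r3 r5 by (rule ev_h2)
  have eB': "even ((\<Sum>i<m. \<Sum>j<n. B i j) + m * (\<Sum>j<n. of_bool (s2 j)))"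
    using eB unfolding r4 r6 by (rule ev_h2)
  show False using ev_h3[OF e2 eA' eB'] odd by blast
qed

lemma ihom_switch:
  assumes "ihom m n S1 S2 k c y pm"
    and "\<forall>i<m. s1 i = (S1 i \<noteq> (t1 i \<noteq> t1 (Suc i mod m)))"
    and "\<forall>j<n. s2 j = (S2 j \<noteq> (t2 j \<noteq> t2 (Suc j mod n)))"
  shows "ihom m n s1 s2 k c (\<lambda>i j. (y i j \<noteq> t1 i) \<noteq> t2 j) pm"
  using assms unfolding ihom_def by auto

lemma pot:
  fixes s :: "nat \<Rightarrow> bool"
  assumes "i < m"
  shows "s i = ((odd (\<Sum>l<m. of_bool (s l) :: nat) \<and> i = m - 1) \<noteq>
     (odd (\<Sum>l<i. of_bool (s l) :: nat) \<noteq> odd (\<Sum>l<Suc i mod m. of_bool (s l) :: nat)))"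
proof (cases "Suc i = m")
  case True
  then have "Suc i mod m = 0" by simp
  moreover have "(\<Sum>l<m. of_bool (s l) :: nat) = (\<Sum>l<i. of_bool (s l)) + of_bool (s i)"
    using True[symmetric] by simp
  ultimately show ?thesis using True by auto
next
  case False
  then have a: "Suc i mod m = Suc i" "i \<noteq> m - 1" using assms by auto
  have b: "(\<Sum>l<Suc i. of_bool (s l) :: nat) = (\<Sum>l<i. of_bool (s l)) + of_bool (s i)" by simp
  have "s i = (odd (\<Sum>l<i. of_bool (s l) :: nat) \<noteq> odd ((\<Sum>l<i. of_bool (s l) :: nat) + of_bool (s i)))"
    by (cases "s i") auto
  then show ?thesis unfolding a(1) b using a(2) by simp
qed

definition cfold :: "nat \<Rightarrow> nat \<Rightarrow> nat" where
  "cfold m i = (if odd m then (if i = m - 1 then 2 else i mod 2)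
               else (if i = m - 2 then 2 else if i = m - 1 then 3 else i mod 2))"

definition msz :: "nat \<Rightarrow> nat" where "msz m = (if odd m then 3 else 4)"

lemma cfold_ok:
  assumes "3 \<le> m" "i < m"
  shows "cfold m i < msz m \<and>
    ((cfold m (Suc i mod m) = Suc (cfold m i) mod msz m \<and> (i = m - 1 \<longleftrightarrow> cfold m i = msz m - 1)) \<or>
     (cfold m i = Suc (cfold m (Suc i mod m)) mod msz m \<and> i \<noteq> m - 1 \<and> cfold m (Suc i mod m) \<noteq> msz m - 1))"
proof (cases "odd m")
  case True
  show ?thesis
  proof (cases "i = m - 1")
    case True
    then show ?thesis using \<open>odd m\<close> assms unfolding cfold_def msz_def by auto
  next
    case False
    then have si: "Suc i mod m = Suc i" using assms by auto
    show ?thesis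
    proof (cases "Suc i = m - 1")
      case True
      then have "odd i" using \<open>odd m\<close> assms by presburger
      then show ?thesis using \<open>odd m\<close> True False si assms unfolding cfold_def msz_def by (auto simp: odd_iff_mod_2_eq_one)
    next
      case False
      then show ?thesis using \<open>odd m\<close> \<open>i \<noteq> m - 1\<close> si assms unfolding cfold_def msz_def
        by (auto simp: mod_Suc)
    qed
  qed
next
  case False
  then have ev: "even m" by simp
  show ?thesis
  proof (cases "i = m - 1")
    case True
    then show ?thesis using ev assms unfolding cfold_def msz_def by auto
  next
    case False
    then have si: "Suc i mod m = Suc i" using assms by auto
    show ?thesis
    proof (cases "i = m - 2")
      case True
      then show ?thesis using ev False si assms unfolding cfold_def msz_def by auto
    next
      case False2: False
      show ?thesis
      proof (cases "Suc i = m - 2")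
        case True
        then have "odd i" using ev assms by presburger
        then show ?thesis using ev True False False2 si assms unfolding cfold_def msz_def
          by (auto simp: odd_iff_mod_2_eq_one)
      next
        case False3: False
        then show ?thesis using ev False False2 si assms unfolding cfold_def msz_def
          by (auto simp: mod_Suc)
      qed
    qed
  qed
qed

lemma ihom_fold:
  assumes base: "ihom (msz m) (msz n) (\<lambda>a. \<beta>1 \<and> a = msz m - 1) (\<lambda>b. \<beta>2 \<and> b = msz n - 1) k col y pm"
   and m: "3 \<le> m" and n: "3 \<le> n"
  shows "ihom m n (\<lambda>i. \<beta>1 \<and> i = m - 1) (\<lambda>j. \<beta>2 \<and> j = n - 1) k
           (\<lambda>i j. col (cfold m i) (cfold n j)) (\<lambda>i j. y (cfold m i) (cfold n j)) pm"
proof -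
  have sym: "\<And>a b. pm a b = pm b a" using base unfolding ihom_def by auto
  have B: "\<And>p q. p < msz m \<Longrightarrow> q < msz n \<Longrightarrow> col p q < k \<and> col p q \<noteq> col (Suc p mod msz m) q \<and> col p q \<noteq> col p (Suc q mod msz n) \<and>
       pm (col p q) (col (Suc p mod msz m) q) = ((\<beta>1 \<and> p = msz m - 1) \<noteq> (y p q \<noteq> y (Suc p mod msz m) q)) \<and>
       pm (col p q) (col p (Suc q mod msz n)) = ((\<beta>2 \<and> q = msz n - 1) \<noteq> (y p q \<noteq> y p (Suc q mod msz n)))"
    using base unfolding ihom_def by blast
  show ?thesis unfolding ihom_def
  proof (intro conjI allI impI)
    fix a b show "pm a b = pm b a" by (rule sym)
  next
    fix i j assume i: "i < m" and j: "j < n"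
    have Fi: "cfold m i < msz m" "cfold m (Suc i mod m) < msz m" using cfold_ok[OF m i] cfold_ok[OF m, of "Suc i mod m"] m by auto
    have Fj: "cfold n j < msz n" "cfold n (Suc j mod n) < msz n" using cfold_ok[OF n j] cfold_ok[OF n, of "Suc j mod n"] n by auto
    note B1 = B[OF Fi(1) Fj(1)] and B2 = B[OF Fi(2) Fj(1)] and B3 = B[OF Fi(1) Fj(2)]
    show "col (cfold m i) (cfold n j) < k" using B1 by auto
    have hor: "col (cfold m i) (cfold n j) \<noteq> col (cfold m (Suc i mod m)) (cfold n j) \<and>
      pm (col (cfold m i) (cfold n j)) (col (cfold m (Suc i mod m)) (cfold n j)) =
      ((\<beta>1 \<and> i = m - 1) \<noteq> (y (cfold m i) (cfold n j) \<noteq> y (cfold m (Suc i mod m)) (cfold n j)))"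
      using cfold_ok[OF m i]
    proof (elim conjE disjE)
      assume "cfold m (Suc i mod m) = Suc (cfold m i) mod msz m" "(i = m - 1) = (cfold m i = msz m - 1)"
      then show ?thesis using B1 by auto
    next
      assume "cfold m i = Suc (cfold m (Suc i mod m)) mod msz m" "i \<noteq> m - 1" "cfold m (Suc i mod m) \<noteq> msz m - 1"
      then show ?thesis using B2 sym by auto
    qed
    have ver: "col (cfold m i) (cfold n j) \<noteq> col (cfold m i) (cfold n (Suc j mod n)) \<and>
      pm (col (cfold m i) (cfold n j)) (col (cfold m i) (cfold n (Suc j mod n))) =
      ((\<beta>2 \<and> j = n - 1) \<noteq> (y (cfold m i) (cfold n j) \<noteq> y (cfold m i) (cfold n (Suc j mod n))))"
      using cfold_ok[OF n j]
    proof (elim conjE disjE)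
      assume "cfold n (Suc j mod n) = Suc (cfold n j) mod msz n" "(j = n - 1) = (cfold n j = msz n - 1)"
      then show ?thesis using B1 by auto
    next
      assume "cfold n j = Suc (cfold n (Suc j mod n)) mod msz n" "j \<noteq> n - 1" "cfold n (Suc j mod n) \<noteq> msz n - 1"
      then show ?thesis using B3 sym by auto
    qed
    show "col (cfold m i) (cfold n j) \<noteq> col (cfold m (Suc i mod m)) (cfold n j)" using hor by blast
    show "col (cfold m i) (cfold n j) \<noteq> col (cfold m i) (cfold n (Suc j mod n))" using ver by blast
    show "pm (col (cfold m i) (cfold n j)) (col (cfold m (Suc i mod m)) (cfold n j)) =
      ((\<beta>1 \<and> i = m - 1) \<noteq> (y (cfold m i) (cfold n j) \<noteq> y (cfold m (Suc i mod m)) (cfold n j)))" using hor by blast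
    show "pm (col (cfold m i) (cfold n j)) (col (cfold m i) (cfold n (Suc j mod n))) =
      ((\<beta>2 \<and> j = n - 1) \<noteq> (y (cfold m i) (cfold n j) \<noteq> y (cfold m i) (cfold n (Suc j mod n))))" using ver by blast
  qed
qed

lemma UB:
  assumes m: "3 \<le> m" and n: "3 \<le> n"
    and base: "\<exists>col y pm. ihom (msz m) (msz n) (\<lambda>a. odd (\<Sum>l<m. of_bool (s1 l) :: nat) \<and> a = msz m - 1)
                 (\<lambda>b. odd (\<Sum>l<n. of_bool (s2 l) :: nat) \<and> b = msz n - 1) k col y pm"
  shows "\<exists>c x pm. ihom m n s1 s2 k c x pm"
proof -
  obtain col y pm where b: "ihom (msz m) (msz n) (\<lambda>a. odd (\<Sum>l<m. of_bool (s1 l) :: nat) \<and> a = msz m - 1)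
                 (\<lambda>b. odd (\<Sum>l<n. of_bool (s2 l) :: nat) \<and> b = msz n - 1) k col y pm" using base by blast
  have "ihom m n s1 s2 k (\<lambda>i j. col (cfold m i) (cfold n j))
     (\<lambda>i j. (y (cfold m i) (cfold n j) \<noteq> odd (\<Sum>l<i. of_bool (s1 l) :: nat)) \<noteq> odd (\<Sum>l<j. of_bool (s2 l) :: nat)) pm"
  proof (rule ihom_switch[OF ihom_fold[OF b m n]])
    show "\<forall>i<m. s1 i = ((odd (\<Sum>l<m. of_bool (s1 l) :: nat) \<and> i = m - 1) \<noteq>
      (odd (\<Sum>l<i. of_bool (s1 l) :: nat) \<noteq> odd (\<Sum>l<Suc i mod m. of_bool (s1 l) :: nat)))"
      by (intro allI impI pot)
    show "\<forall>j<n. s2 j = ((odd (\<Sum>l<n. of_bool (s2 l) :: nat) \<and> j = n - 1) \<noteq>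
      (odd (\<Sum>l<j. of_bool (s2 l) :: nat) \<noteq> odd (\<Sum>l<Suc j mod n. of_bool (s2 l) :: nat)))"
      by (intro allI impI pot)
  qed
  then show ?thesis by blast
qed

lemma lt3: "(x::nat) < 3 \<longleftrightarrow> x = 0 \<or> x = 1 \<or> x = 2" by auto
lemma lt4': "(x::nat) < 4 \<longleftrightarrow> x = 0 \<or> x = 1 \<or> x = 2 \<or> x = 3" by auto
lemma all3: "(\<forall>i<(3::nat). P i) = (P 0 \<and> P 1 \<and> P 2)"
  unfolding lt3 by blast
lemma all4: "(\<forall>i<(4::nat). P i) = (P 0 \<and> P 1 \<and> P 2 \<and> P 3)"
  unfolding lt4' by blast

lemma base_3_False_3_False: "\<exists>col y pm. ihom 3 3 (\<lambda>a. False \<and> a = 3 - 1) (\<lambda>b. False \<and> b = 3 - 1) 3 col y pm"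
proof (intro exI)
  show "ihom 3 3 (\<lambda>a. False \<and> a = 3 - 1) (\<lambda>b. False \<and> b = 3 - 1) 3 (\<lambda>i j. [[0,1,2],[1,2,0],[2,0,1]] ! i ! j) (\<lambda>i j. [[False,False,False],[False,False,False],[False,False,False]] ! i ! j)
     (\<lambda>a b. (min a b, max a b) \<in> set ([] :: (nat \<times> nat) list))"
    unfolding ihom_def all3 all4 by (simp add: min.commute max.commute)
qed

lemma base_3_False_3_True: "\<exists>col y pm. ihom 3 3 (\<lambda>a. False \<and> a = 3 - 1) (\<lambda>b. True \<and> b = 3 - 1) 5 col y pm"
proof (intro exI)
  show "ihom 3 3 (\<lambda>a. False \<and> a = 3 - 1) (\<lambda>b. True \<and> b = 3 - 1) 5 (\<lambda>i j. [[0,1,4],[1,3,2],[2,0,3]] ! i ! j) (\<lambda>i j. [[False,False,True],[False,False,True],[False,False,False]] ! i ! j)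
     (\<lambda>a b. (min a b, max a b) \<in> set ([(1,4),(2,3),(3,4)] :: (nat \<times> nat) list))"
    unfolding ihom_def all3 all4 by (simp add: min.commute max.commute)
qed

lemma base_3_False_4_False: "\<exists>col y pm. ihom 3 4 (\<lambda>a. False \<and> a = 3 - 1) (\<lambda>b. False \<and> b = 4 - 1) 3 col y pm"
proof (intro exI)
  show "ihom 3 4 (\<lambda>a. False \<and> a = 3 - 1) (\<lambda>b. False \<and> b = 4 - 1) 3 (\<lambda>i j. [[0,1,0,1],[1,2,1,2],[2,0,2,0]] ! i ! j) (\<lambda>i j. [[False,False,False,False],[False,False,False,False],[False,False,False,False]] ! i ! j)
     (\<lambda>a b. (min a b, max a b) \<in> set ([] :: (nat \<times> nat) list))"
    unfolding ihom_def all3 all4 by (simp add: min.commute max.commute)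
qed

lemma base_3_False_4_True: "\<exists>col y pm. ihom 3 4 (\<lambda>a. False \<and> a = 3 - 1) (\<lambda>b. True \<and> b = 4 - 1) 5 col y pm"
proof (intro exI)
  show "ihom 3 4 (\<lambda>a. False \<and> a = 3 - 1) (\<lambda>b. True \<and> b = 4 - 1) 5 (\<lambda>i j. [[0,1,2,3],[1,2,0,4],[2,0,4,1]] ! i ! j) (\<lambda>i j. [[False,False,False,True],[False,False,False,False],[False,False,False,True]] ! i ! j)
     (\<lambda>a b. (min a b, max a b) \<in> set ([(1,4),(2,3),(3,4)] :: (nat \<times> nat) list))"
    unfolding ihom_def all3 all4 by (simp add: min.commute max.commute)
qed

lemma base_3_True_3_False: "\<exists>col y pm. ihom 3 3 (\<lambda>a. True \<and> a = 3 - 1) (\<lambda>b. False \<and> b = 3 - 1) 5 col y pm"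
proof (intro exI)
  show "ihom 3 3 (\<lambda>a. True \<and> a = 3 - 1) (\<lambda>b. False \<and> b = 3 - 1) 5 (\<lambda>i j. [[0,1,2],[1,3,0],[4,2,3]] ! i ! j) (\<lambda>i j. [[False,False,False],[False,False,False],[True,True,False]] ! i ! j)
     (\<lambda>a b. (min a b, max a b) \<in> set ([(1,4),(2,3),(3,4)] :: (nat \<times> nat) list))"
    unfolding ihom_def all3 all4 by (simp add: min.commute max.commute)
qed

lemma base_3_True_3_True: "\<exists>col y pm. ihom 3 3 (\<lambda>a. True \<and> a = 3 - 1) (\<lambda>b. True \<and> b = 3 - 1) 3 col y pm"
proof (intro exI)
  show "ihom 3 3 (\<lambda>a. True \<and> a = 3 - 1) (\<lambda>b. True \<and> b = 3 - 1) 3 (\<lambda>i j. [[0,1,2],[1,2,0],[2,0,1]] ! i ! j) (\<lambda>i j. [[False,False,True],[False,True,True],[True,True,True]] ! i ! j)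
     (\<lambda>a b. (min a b, max a b) \<in> set ([(1,2)] :: (nat \<times> nat) list))"
    unfolding ihom_def all3 all4 by (simp add: min.commute max.commute)
qed

lemma base_3_True_4_False: "\<exists>col y pm. ihom 3 4 (\<lambda>a. True \<and> a = 3 - 1) (\<lambda>b. False \<and> b = 4 - 1) 3 col y pm"
proof (intro exI)
  show "ihom 3 4 (\<lambda>a. True \<and> a = 3 - 1) (\<lambda>b. False \<and> b = 4 - 1) 3 (\<lambda>i j. [[0,1,0,1],[1,2,1,2],[2,0,2,0]] ! i ! j) (\<lambda>i j. [[False,False,False,False],[False,True,False,True],[True,True,True,True]] ! i ! j)
     (\<lambda>a b. (min a b, max a b) \<in> set ([(1,2)] :: (nat \<times> nat) list))"
    unfolding ihom_def all3 all4 by (simp add: min.commute max.commute)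
qed

lemma base_3_True_4_True: "\<exists>col y pm. ihom 3 4 (\<lambda>a. True \<and> a = 3 - 1) (\<lambda>b. True \<and> b = 4 - 1) 5 col y pm"
proof (intro exI)
  show "ihom 3 4 (\<lambda>a. True \<and> a = 3 - 1) (\<lambda>b. True \<and> b = 4 - 1) 5 (\<lambda>i j. [[0,1,2,3],[1,3,0,4],[4,2,3,0]] ! i ! j) (\<lambda>i j. [[False,False,False,True],[False,False,False,False],[True,True,False,False]] ! i ! j)
     (\<lambda>a b. (min a b, max a b) \<in> set ([(1,4),(2,3),(3,4)] :: (nat \<times> nat) list))"
    unfolding ihom_def all3 all4 by (simp add: min.commute max.commute)
qed

lemma base_4_False_3_False: "\<exists>col y pm. ihom 4 3 (\<lambda>a. False \<and> a = 4 - 1) (\<lambda>b. False \<and> b = 3 - 1) 3 col y pm"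
proof (intro exI)
  show "ihom 4 3 (\<lambda>a. False \<and> a = 4 - 1) (\<lambda>b. False \<and> b = 3 - 1) 3 (\<lambda>i j. [[0,1,2],[1,2,0],[0,1,2],[1,2,0]] ! i ! j) (\<lambda>i j. [[False,False,False],[False,False,False],[False,False,False],[False,False,False]] ! i ! j)
     (\<lambda>a b. (min a b, max a b) \<in> set ([] :: (nat \<times> nat) list))"
    unfolding ihom_def all3 all4 by (simp add: min.commute max.commute)
qed

lemma base_4_False_3_True: "\<exists>col y pm. ihom 4 3 (\<lambda>a. False \<and> a = 4 - 1) (\<lambda>b. True \<and> b = 3 - 1) 3 col y pm"
proof (intro exI)
  show "ihom 4 3 (\<lambda>a. False \<and> a = 4 - 1) (\<lambda>b. True \<and> b = 3 - 1) 3 (\<lambda>i j. [[0,1,2],[1,2,0],[0,1,2],[1,2,0]] ! i ! j) (\<lambda>i j. [[False,False,True],[False,True,True],[False,False,True],[False,True,True]] ! i ! j)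
     (\<lambda>a b. (min a b, max a b) \<in> set ([(1,2)] :: (nat \<times> nat) list))"
    unfolding ihom_def all3 all4 by (simp add: min.commute max.commute)
qed

lemma base_4_False_4_False: "\<exists>col y pm. ihom 4 4 (\<lambda>a. False \<and> a = 4 - 1) (\<lambda>b. False \<and> b = 4 - 1) 2 col y pm"
proof (intro exI)
  show "ihom 4 4 (\<lambda>a. False \<and> a = 4 - 1) (\<lambda>b. False \<and> b = 4 - 1) 2 (\<lambda>i j. [[0,1,0,1],[1,0,1,0],[0,1,0,1],[1,0,1,0]] ! i ! j) (\<lambda>i j. [[False,False,False,False],[False,False,False,False],[False,False,False,False],[False,False,False,False]] ! i ! j)
     (\<lambda>a b. (min a b, max a b) \<in> set ([] :: (nat \<times> nat) list))"
    unfolding ihom_def all3 all4 by (simp add: min.commute max.commute)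
qed

lemma base_4_False_4_True: "\<exists>col y pm. ihom 4 4 (\<lambda>a. False \<and> a = 4 - 1) (\<lambda>b. True \<and> b = 4 - 1) 4 col y pm"
proof (intro exI)
  show "ihom 4 4 (\<lambda>a. False \<and> a = 4 - 1) (\<lambda>b. True \<and> b = 4 - 1) 4 (\<lambda>i j. [[0,1,2,3],[1,2,3,0],[0,1,2,3],[1,2,3,0]] ! i ! j) (\<lambda>i j. [[False,False,False,True],[False,False,True,True],[False,False,False,True],[False,False,True,True]] ! i ! j)
     (\<lambda>a b. (min a b, max a b) \<in> set ([(2,3)] :: (nat \<times> nat) list))"
    unfolding ihom_def all3 all4 by (simp add: min.commute max.commute)
qed

lemma base_4_True_3_False: "\<exists>col y pm. ihom 4 3 (\<lambda>a. True \<and> a = 4 - 1) (\<lambda>b. False \<and> b = 3 - 1) 5 col y pm"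
proof (intro exI)
  show "ihom 4 3 (\<lambda>a. True \<and> a = 4 - 1) (\<lambda>b. False \<and> b = 3 - 1) 5 (\<lambda>i j. [[0,1,2],[1,2,0],[2,0,4],[3,4,1]] ! i ! j) (\<lambda>i j. [[False,False,False],[False,False,False],[False,False,False],[True,False,True]] ! i ! j)
     (\<lambda>a b. (min a b, max a b) \<in> set ([(1,4),(2,3),(3,4)] :: (nat \<times> nat) list))"
    unfolding ihom_def all3 all4 by (simp add: min.commute max.commute)
qed

lemma base_4_True_3_True: "\<exists>col y pm. ihom 4 3 (\<lambda>a. True \<and> a = 4 - 1) (\<lambda>b. True \<and> b = 3 - 1) 5 col y pm"
proof (intro exI)
  show "ihom 4 3 (\<lambda>a. True \<and> a = 4 - 1) (\<lambda>b. True \<and> b = 3 - 1) 5 (\<lambda>i j. [[0,1,4],[1,3,2],[2,0,3],[3,4,0]] ! i ! j) (\<lambda>i j. [[False,False,True],[False,False,True],[False,False,False],[True,False,False]] ! i ! j)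
     (\<lambda>a b. (min a b, max a b) \<in> set ([(1,4),(2,3),(3,4)] :: (nat \<times> nat) list))"
    unfolding ihom_def all3 all4 by (simp add: min.commute max.commute)
qed

lemma base_4_True_4_False: "\<exists>col y pm. ihom 4 4 (\<lambda>a. True \<and> a = 4 - 1) (\<lambda>b. False \<and> b = 4 - 1) 4 col y pm"
proof (intro exI)
  show "ihom 4 4 (\<lambda>a. True \<and> a = 4 - 1) (\<lambda>b. False \<and> b = 4 - 1) 4 (\<lambda>i j. [[0,1,0,1],[1,2,1,2],[2,3,2,3],[3,0,3,0]] ! i ! j) (\<lambda>i j. [[False,False,False,False],[False,False,False,False],[False,True,False,True],[True,True,True,True]] ! i ! j)
     (\<lambda>a b. (min a b, max a b) \<in> set ([(2,3)] :: (nat \<times> nat) list))"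
    unfolding ihom_def all3 all4 by (simp add: min.commute max.commute)
qed

lemma base_4_True_4_True: "\<exists>col y pm. ihom 4 4 (\<lambda>a. True \<and> a = 4 - 1) (\<lambda>b. True \<and> b = 4 - 1) 4 col y pm"
proof (intro exI)
  show "ihom 4 4 (\<lambda>a. True \<and> a = 4 - 1) (\<lambda>b. True \<and> b = 4 - 1) 4 (\<lambda>i j. [[0,1,2,3],[1,2,3,0],[2,3,0,1],[3,0,1,2]] ! i ! j) (\<lambda>i j. [[False,False,False,True],[False,False,True,True],[False,True,True,True],[True,True,True,True]] ! i ! j)
     (\<lambda>a b. (min a b, max a b) \<in> set ([(2,3)] :: (nat \<times> nat) list))"
    unfolding ihom_def all3 all4 by (simp add: min.commute max.commute)
qed




lemma card2:
  assumes "p \<noteq> q"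
  shows "(card ({p, q} \<inter> X) = 1) = ((p \<in> X) \<noteq> (q \<in> X))"
  using assms by (cases "p \<in> X"; cases "q \<in> X") auto

lemma cyc_param:
  assumes "signed_cycle V E N"
  obtains m f where "3 \<le> m" "bij_betw f {..<m} V" "E = {{f i, f (Suc i mod m)} | i. i < m}" "N \<subseteq> E"
  using assms unfolding signed_cycle_def is_cycle_def by blast

lemma mod_neq:
  assumes "3 \<le> m" "i < m"
  shows "Suc i mod m \<noteq> i" "i \<noteq> Suc (Suc i mod m) mod m"
  using assms by (auto simp: mod_Suc)

lemma edge_inj:
  assumes "3 \<le> m" "inj_on f {..<m}" "i < m" "j < m"
    and "{f i, f (Suc i mod m)} = {f j, f (Suc j mod m)}"
  shows "i = j"
proof -
  have lt: "Suc i mod m < m" "Suc j mod m < m" using assms by auto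
  from assms(5) have "(f i = f j \<and> f (Suc i mod m) = f (Suc j mod m)) \<or> (f i = f (Suc j mod m) \<and> f (Suc i mod m) = f j)"
    by (auto simp: doubleton_eq_iff)
  then show ?thesis
  proof
    assume "f i = f j \<and> f (Suc i mod m) = f (Suc j mod m)"
    then show ?thesis using assms inj_onD[OF assms(2)] by auto
  next
    assume "f i = f (Suc j mod m) \<and> f (Suc i mod m) = f j"
    then have "i = Suc j mod m" "Suc i mod m = j" using assms lt inj_onD[OF assms(2)] by auto
    then show ?thesis using mod_neq[OF assms(1,3)] by auto
  qed
qed

lemma card_N:
  assumes "3 \<le> m" "bij_betw f {..<m} V" "E = {{f i, f (Suc i mod m)} | i. i < m}" "N \<subseteq> E"
  shows "card N = (\<Sum>i<m. of_bool ({f i, f (Suc i mod m)} \<in> N) :: nat)"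
proof -
  define e where "e i = {f i, f (Suc i mod m)}" for i
  have inj: "inj_on f {..<m}" using assms(2) by (simp add: bij_betw_def)
  have NE: "N = e ` {i \<in> {..<m}. e i \<in> N}"
  proof
    show "N \<subseteq> e ` {i \<in> {..<m}. e i \<in> N}"
    proof
      fix z assume z: "z \<in> N"
      then have "z \<in> E" using assms(4) by blast
      then obtain i where "i < m" "z = e i" using assms(3) unfolding e_def by blast
      then show "z \<in> e ` {i \<in> {..<m}. e i \<in> N}" using z by blast
    qed
    show "e ` {i \<in> {..<m}. e i \<in> N} \<subseteq> N" by blast
  qed
  have "inj_on e {i \<in> {..<m}. e i \<in> N}"
  proof (rule inj_onI)
    fix i j assume "i \<in> {i \<in> {..<m}. e i \<in> N}" "j \<in> {i \<in> {..<m}. e i \<in> N}" "e i = e j"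
    then show "i = j" using edge_inj[OF assms(1) inj, of i j] unfolding e_def by blast
  qed
  then have "card N = card {i \<in> {..<m}. e i \<in> N}"
    using NE card_image by metis
  also have "\<dots> = (\<Sum>i<m. of_bool (e i \<in> N) :: nat)"
    by (simp add: Int_def)
  finally show ?thesis unfolding e_def .
qed

locale psetup =
  fixes m n :: nat and f1 :: "nat \<Rightarrow> 'a" and f2 :: "nat \<Rightarrow> 'b"
    and V1 :: "'a set" and E1 N1 :: "'a set set" and V2 :: "'b set" and E2 N2 :: "'b set set"
  assumes m3: "3 \<le> m" and n3: "3 \<le> n"
    and b1: "bij_betw f1 {..<m} V1" and b2: "bij_betw f2 {..<n} V2"
    and E1: "E1 = {{f1 i, f1 (Suc i mod m)} | i. i < m}" and E2: "E2 = {{f2 j, f2 (Suc j mod n)} | j. j < n}"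
    and N1: "N1 \<subseteq> E1" and N2: "N2 \<subseteq> E2"
begin

definition H where "H i j = {(f1 i, f2 j), (f1 (Suc i mod m), f2 j)}"
definition Vt where "Vt i j = {(f1 i, f2 j), (f1 i, f2 (Suc j mod n))}"
definition s1 where "s1 i = ({f1 i, f1 (Suc i mod m)} \<in> N1)"
definition s2 where "s2 j = ({f2 j, f2 (Suc j mod n)} \<in> N2)"

lemma inj1: "inj_on f1 {..<m}" using b1 by (simp add: bij_betw_def)
lemma inj2: "inj_on f2 {..<n}" using b2 by (simp add: bij_betw_def)
lemma V1_eq: "V1 = f1 ` {..<m}" using b1 by (simp add: bij_betw_def)
lemma V2_eq: "V2 = f2 ` {..<n}" using b2 by (simp add: bij_betw_def)

lemma ip1: "i < m \<Longrightarrow> Suc i mod m < m" "i < m \<Longrightarrow> Suc i mod m \<noteq> i"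
  using m3 by (auto simp: mod_Suc)
lemma ip2: "j < n \<Longrightarrow> Suc j mod n < n" "j < n \<Longrightarrow> Suc j mod n \<noteq> j"
  using n3 by (auto simp: mod_Suc)

lemma f1_ne: "i < m \<Longrightarrow> f1 (Suc i mod m) \<noteq> f1 i"
  using ip1 inj1 by (metis inj_on_eq_iff lessThan_iff)
lemma f2_ne: "j < n \<Longrightarrow> f2 (Suc j mod n) \<noteq> f2 j"
  using ip2 inj2 by (metis inj_on_eq_iff lessThan_iff)

lemma E_char: "prod_E V1 E1 V2 E2 = {H i j | i j. i < m \<and> j < n} \<union> {Vt i j | i j. i < m \<and> j < n}"
proof
  show "prod_E V1 E1 V2 E2 \<subseteq> {H i j | i j. i < m \<and> j < n} \<union> {Vt i j | i j. i < m \<and> j < n}"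
  proof
    fix e assume "e \<in> prod_E V1 E1 V2 E2"
    then consider (a) u v1 v2 where "e = {(u, v1), (u, v2)}" "u \<in> V1" "{v1, v2} \<in> E2"
      | (b) u1 u2 v where "e = {(u1, v), (u2, v)}" "{u1, u2} \<in> E1" "v \<in> V2"
      unfolding prod_E_def by blast
    then show "e \<in> {H i j | i j. i < m \<and> j < n} \<union> {Vt i j | i j. i < m \<and> j < n}"
    proof cases
      case a
      obtain i where i: "i < m" "u = f1 i" using a(2) V1_eq by blast
      obtain j where j: "j < n" "{v1, v2} = {f2 j, f2 (Suc j mod n)}" using a(3) E2 by blast
      have "e = Vt i j" using a(1) i j(2) unfolding Vt_def by (auto simp: doubleton_eq_iff)
      then show ?thesis using i j by blast
    next
      case b
      obtain j where j: "j < n" "v = f2 j" using b(3) V2_eq by blast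
      obtain i where i: "i < m" "{u1, u2} = {f1 i, f1 (Suc i mod m)}" using b(2) E1 by blast
      have "e = H i j" using b(1) j i(2) unfolding H_def by (auto simp: doubleton_eq_iff)
      then show ?thesis using i j by blast
    qed
  qed
  show "{H i j | i j. i < m \<and> j < n} \<union> {Vt i j | i j. i < m \<and> j < n} \<subseteq> prod_E V1 E1 V2 E2"
  proof
    fix e assume "e \<in> {H i j | i j. i < m \<and> j < n} \<union> {Vt i j | i j. i < m \<and> j < n}"
    then consider (a) i j where "i < m" "j < n" "e = H i j" | (b) i j where "i < m" "j < n" "e = Vt i j"
      by blast
    then show "e \<in> prod_E V1 E1 V2 E2"
    proof cases
      case a
      have "{f1 i, f1 (Suc i mod m)} \<in> E1" using a E1 by blast
      moreover have "f2 j \<in> V2" using a V2_eq by blast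
      ultimately show ?thesis unfolding prod_E_def a(3) H_def by blast
    next
      case b
      have "{f2 j, f2 (Suc j mod n)} \<in> E2" using b E2 by blast
      moreover have "f1 i \<in> V1" using b V1_eq by blast
      ultimately show ?thesis unfolding prod_E_def b(3) Vt_def by blast
    qed
  qed
qed

lemma H_N: assumes "i < m" "j < n" shows "(H i j \<in> prod_N V1 N1 V2 N2) = s1 i"
proof
  assume "H i j \<in> prod_N V1 N1 V2 N2"
  then consider (a) u v1 v2 where "H i j = {(u, v1), (u, v2)}" | (b) u1 u2 v where "H i j = {(u1, v), (u2, v)}" "{u1, u2} \<in> N1"
    unfolding prod_N_def by blast
  then show "s1 i"
  proof cases
    case a
    then have "f1 i = u" "f1 (Suc i mod m) = u" unfolding H_def by (auto simp: doubleton_eq_iff)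
    then show ?thesis using f1_ne[OF assms(1)] by simp
  next
    case b
    then have "{u1, u2} = {f1 i, f1 (Suc i mod m)}" unfolding H_def by (auto simp: doubleton_eq_iff)
    then show ?thesis using b(2) unfolding s1_def by simp
  qed
next
  assume "s1 i"
  moreover have "f2 j \<in> V2" using assms V2_eq by blast
  ultimately show "H i j \<in> prod_N V1 N1 V2 N2" unfolding prod_N_def H_def s1_def by blast
qed

lemma V_N: assumes "i < m" "j < n" shows "(Vt i j \<in> prod_N V1 N1 V2 N2) = s2 j"
proof
  assume "Vt i j \<in> prod_N V1 N1 V2 N2"
  then consider (a) u v1 v2 where "Vt i j = {(u, v1), (u, v2)}" "{v1, v2} \<in> N2" | (b) u1 u2 v where "Vt i j = {(u1, v), (u2, v)}"
    unfolding prod_N_def by blast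
  then show "s2 j"
  proof cases
    case a
    then have "{v1, v2} = {f2 j, f2 (Suc j mod n)}" unfolding Vt_def by (auto simp: doubleton_eq_iff)
    then show ?thesis using a(2) unfolding s2_def by simp
  next
    case b
    then have "f2 j = v" "f2 (Suc j mod n) = v" unfolding Vt_def by (auto simp: doubleton_eq_iff)
    then show ?thesis using f2_ne[OF assms(2)] by simp
  qed
next
  assume "s2 j"
  moreover have "f1 i \<in> V1" using assms V1_eq by blast
  ultimately show "Vt i j \<in> prod_N V1 N1 V2 N2" unfolding prod_N_def Vt_def s2_def by blast
qed

lemma to_idx:
  assumes sg: "signed_graph {0..<k} F M"
    and h: "signed_hom (prod_V V1 V2) (prod_E V1 E1 V2 E2) (prod_N V1 N1 V2 N2) {0..<k} F M \<phi>"
  shows "\<exists>c x pm. ihom m n s1 s2 k c x pm"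
proof -
  obtain X where sw: "\<forall>e\<in>prod_E V1 E1 V2 E2. (\<phi> ` e \<in> M) = (e \<in> switch (prod_E V1 E1 V2 E2) (prod_N V1 N1 V2 N2) X)"
    using h unfolding signed_hom_def by blast
  have hv: "\<forall>v\<in>prod_V V1 V2. \<phi> v \<in> {0..<k}" and he: "\<forall>e\<in>prod_E V1 E1 V2 E2. \<phi> ` e \<in> F"
    using h unfolding signed_hom_def by blast+
  have Fs: "F \<subseteq> {{u, v} | u v. u \<in> {0..<k} \<and> v \<in> {0..<k} \<and> u \<noteq> v}"
    using sg unfolding signed_graph_def by blast
  define c where "c i j = \<phi> (f1 i, f2 j)" for i j
  define x where "x i j = ((f1 i, f2 j) \<in> X)" for i j
  define pm where "pm a b = ({a, b} \<in> M)" for a b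
  have "ihom m n s1 s2 k c x pm"
    unfolding ihom_def
  proof (intro conjI allI impI)
    fix a b show "pm a b = pm b a" unfolding pm_def by (simp add: insert_commute)
  next
    fix i j assume i: "i < m" and j: "j < n"
    have i2: "Suc i mod m < m" and j2: "Suc j mod n < n" using ip1 ip2 i j by auto
    have v: "f1 i \<in> V1" "f1 (Suc i mod m) \<in> V1" "f2 j \<in> V2" "f2 (Suc j mod n) \<in> V2"
      using i i2 j j2 V1_eq V2_eq by blast+
    show "c i j < k" using hv v unfolding c_def prod_V_def by auto
    have HE: "H i j \<in> prod_E V1 E1 V2 E2" and VE: "Vt i j \<in> prod_E V1 E1 V2 E2"
      unfolding E_char using i j by blast+
    have imH: "\<phi> ` H i j = {c i j, c (Suc i mod m) j}" unfolding H_def c_def by simp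
    have imV: "\<phi> ` Vt i j = {c i j, c i (Suc j mod n)}" unfolding Vt_def c_def by simp
    have ne: "\<And>a b. {a, b} \<in> F \<Longrightarrow> a \<noteq> b"
    proof -
      fix a b assume "{a, b} \<in> F"
      then obtain u v where "{a, b} = {u, v}" "u \<noteq> v" using Fs by blast
      then show "a \<noteq> b" by (auto simp: doubleton_eq_iff)
    qed
    show "c i j \<noteq> c (Suc i mod m) j" using he HE imH ne by metis
    show "c i j \<noteq> c i (Suc j mod n)" using he VE imV ne by metis
    have pH: "(f1 i, f2 j) \<noteq> (f1 (Suc i mod m), f2 j)" using f1_ne[OF i] by simp
    have pV: "(f1 i, f2 j) \<noteq> (f1 i, f2 (Suc j mod n))" using f2_ne[OF j] by simp
    have "pm (c i j) (c (Suc i mod m) j) = (\<phi> ` H i j \<in> M)" unfolding pm_def imH ..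
    also have "\<dots> = (H i j \<in> switch (prod_E V1 E1 V2 E2) (prod_N V1 N1 V2 N2) X)" using sw HE by blast
    also have "\<dots> = ((H i j \<in> prod_N V1 N1 V2 N2) \<noteq> (card (H i j \<inter> X) = 1))"
      unfolding switch_def using HE by blast
    also have "\<dots> = (s1 i \<noteq> (x i j \<noteq> x (Suc i mod m) j))"
      unfolding H_N[OF i j] unfolding H_def card2[OF pH] x_def ..
    finally show "pm (c i j) (c (Suc i mod m) j) = (s1 i \<noteq> (x i j \<noteq> x (Suc i mod m) j))" .
    have "pm (c i j) (c i (Suc j mod n)) = (\<phi> ` Vt i j \<in> M)" unfolding pm_def imV ..
    also have "\<dots> = (Vt i j \<in> switch (prod_E V1 E1 V2 E2) (prod_N V1 N1 V2 N2) X)" using sw VE by blast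
    also have "\<dots> = ((Vt i j \<in> prod_N V1 N1 V2 N2) \<noteq> (card (Vt i j \<inter> X) = 1))"
      unfolding switch_def using VE by blast
    also have "\<dots> = (s2 j \<noteq> (x i j \<noteq> x i (Suc j mod n)))"
      unfolding V_N[OF i j] unfolding Vt_def card2[OF pV] x_def ..
    finally show "pm (c i j) (c i (Suc j mod n)) = (s2 j \<noteq> (x i j \<noteq> x i (Suc j mod n)))" .
  qed
  then show ?thesis by blast
qed

lemma from_idx:
  assumes ih: "ihom m n s1 s2 k c x pm"
  shows "\<exists>F M (\<phi> :: 'a \<times> 'b \<Rightarrow> nat). signed_graph {0..<k} F M \<and>
           signed_hom (prod_V V1 V2) (prod_E V1 E1 V2 E2) (prod_N V1 N1 V2 N2) {0..<k} F M \<phi>"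
proof -
  have sym: "\<And>a b. pm a b = pm b a" using ih unfolding ihom_def by blast
  have hh: "\<forall>i<m. \<forall>j<n. c i j < k \<and> c i j \<noteq> c (Suc i mod m) j \<and> c i j \<noteq> c i (Suc j mod n) \<and>
       pm (c i j) (c (Suc i mod m) j) = (s1 i \<noteq> (x i j \<noteq> x (Suc i mod m) j)) \<and>
       pm (c i j) (c i (Suc j mod n)) = (s2 j \<noteq> (x i j \<noteq> x i (Suc j mod n)))"
    using ih unfolding ihom_def by blast
  define F where "F = {{a, b} | a b. a < k \<and> b < k \<and> a \<noteq> b}"
  define M where "M = {{a, b} | a b. a < k \<and> b < k \<and> a \<noteq> b \<and> pm a b}"
  define g1 where "g1 = the_inv_into {..<m} f1"
  define g2 where "g2 = the_inv_into {..<n} f2"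
  define \<phi> :: "'a \<times> 'b \<Rightarrow> nat" where "\<phi> p = c (g1 (fst p)) (g2 (snd p))" for p
  define X where "X = {(f1 i, f2 j) | i j. i < m \<and> j < n \<and> x i j}"
  have phi: "\<phi> (f1 i, f2 j) = c i j" if "i < m" "j < n" for i j
    unfolding \<phi>_def g1_def g2_def using the_inv_into_f_f[OF inj1] the_inv_into_f_f[OF inj2] that by simp
  have Xm: "((f1 i, f2 j) \<in> X) = x i j" if "i < m" "j < n" for i j
  proof
    assume "(f1 i, f2 j) \<in> X"
    then obtain a b where ab: "(f1 i, f2 j) = (f1 a, f2 b)" "a < m" "b < n" "x a b" unfolding X_def by blast
    then have "a = i" "b = j" using inj_onD[OF inj1, of i a] inj_onD[OF inj2, of j b] that by auto
    then show "x i j" using ab by simp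
  qed (use that in \<open>auto simp: X_def\<close>)
  have Mm: "({a, b} \<in> M) = pm a b" if "a < k" "b < k" "a \<noteq> b" for a b
  proof
    assume "{a, b} \<in> M"
    then obtain a' b' where "{a, b} = {a', b'}" "pm a' b'" unfolding M_def by blast
    then show "pm a b" using sym by (auto simp: doubleton_eq_iff)
  qed (use that in \<open>auto simp: M_def\<close>)
  have sg: "signed_graph {0..<k} F M" unfolding signed_graph_def F_def M_def by auto
  have hom: "signed_hom (prod_V V1 V2) (prod_E V1 E1 V2 E2) (prod_N V1 N1 V2 N2) {0..<k} F M \<phi>"
    unfolding signed_hom_def
  proof (intro conjI ballI exI[of _ X])
    fix v assume "v \<in> prod_V V1 V2"
    then obtain i j where "i < m" "j < n" "v = (f1 i, f2 j)" unfolding prod_V_def using V1_eq V2_eq by blast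
    then show "\<phi> v \<in> {0..<k}" using phi hh by auto
  next
    show "X \<subseteq> prod_V V1 V2" unfolding X_def prod_V_def using V1_eq V2_eq by blast
  next
    fix e assume "e \<in> prod_E V1 E1 V2 E2"
    then consider (a) i j where "i < m" "j < n" "e = H i j" | (b) i j where "i < m" "j < n" "e = Vt i j"
      unfolding E_char by blast
    then have "\<phi> ` e \<in> F \<and> ((\<phi> ` e \<in> M) = (e \<in> switch (prod_E V1 E1 V2 E2) (prod_N V1 N1 V2 N2) X))"
    proof cases
      case a
      note i = a(1) and j = a(2)
      have i2: "Suc i mod m < m" using ip1 i by auto
      have im: "\<phi> ` e = {c i j, c (Suc i mod m) j}" unfolding a(3) H_def using phi i i2 j by simp
      have cc: "c i j < k" "c (Suc i mod m) j < k" "c i j \<noteq> c (Suc i mod m) j"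
        "pm (c i j) (c (Suc i mod m) j) = (s1 i \<noteq> (x i j \<noteq> x (Suc i mod m) j))"
        using hh i i2 j by blast+
      have pH: "(f1 i, f2 j) \<noteq> (f1 (Suc i mod m), f2 j)" using f1_ne[OF i] by simp
      have eE: "e \<in> prod_E V1 E1 V2 E2" unfolding E_char a(3) using i j by blast
      have "(e \<in> switch (prod_E V1 E1 V2 E2) (prod_N V1 N1 V2 N2) X) = ((e \<in> prod_N V1 N1 V2 N2) \<noteq> (card (e \<inter> X) = 1))"
        unfolding switch_def using eE by blast
      also have "\<dots> = (s1 i \<noteq> (x i j \<noteq> x (Suc i mod m) j))"
        unfolding a(3) H_N[OF i j] unfolding H_def card2[OF pH] Xm[OF i j] Xm[OF i2 j] ..
      finally show ?thesis unfolding im using cc Mm[OF cc(1-3)] unfolding F_def by blast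
    next
      case b
      note i = b(1) and j = b(2)
      have j2: "Suc j mod n < n" using ip2 j by auto
      have im: "\<phi> ` e = {c i j, c i (Suc j mod n)}" unfolding b(3) Vt_def using phi i j2 j by simp
      have cc: "c i j < k" "c i (Suc j mod n) < k" "c i j \<noteq> c i (Suc j mod n)"
        "pm (c i j) (c i (Suc j mod n)) = (s2 j \<noteq> (x i j \<noteq> x i (Suc j mod n)))"
        using hh i j2 j by blast+
      have pV: "(f1 i, f2 j) \<noteq> (f1 i, f2 (Suc j mod n))" using f2_ne[OF j] by simp
      have eE: "e \<in> prod_E V1 E1 V2 E2" unfolding E_char b(3) using i j by blast
      have "(e \<in> switch (prod_E V1 E1 V2 E2) (prod_N V1 N1 V2 N2) X) = ((e \<in> prod_N V1 N1 V2 N2) \<noteq> (card (e \<inter> X) = 1))"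
        unfolding switch_def using eE by blast
      also have "\<dots> = (s2 j \<noteq> (x i j \<noteq> x i (Suc j mod n)))"
        unfolding b(3) V_N[OF i j] unfolding Vt_def card2[OF pV] Xm[OF i j] Xm[OF i j2] ..
      finally show ?thesis unfolding im using cc Mm[OF cc(1-3)] unfolding F_def by blast
    qed
    then show "\<phi> ` e \<in> F" "(\<phi> ` e \<in> M) = (e \<in> switch (prod_E V1 E1 V2 E2) (prod_N V1 N1 V2 N2) X)"
      by blast+
  qed
  show ?thesis using sg hom by blast
qed

end

lemma least_eq: "Q K \<Longrightarrow> (\<And>k. k < K \<Longrightarrow> Q k \<Longrightarrow> False) \<Longrightarrow> (LEAST k. Q k) = (K::nat)"
  by (metis Least_equality not_less)

definition ity :: "nat \<Rightarrow> nat \<Rightarrow> ctype" where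
  "ity S m = (if even S then (if even m then BC_even else BC_odd) else (if even m then UC_even else UC_odd))"

lemma idx_main:
  assumes m: "3 \<le> m" and n: "3 \<le> n"
  shows "(LEAST k. \<exists>c x pm. ihom m n s1 s2 k c x pm)
     = chi_table (ity (\<Sum>l<m. of_bool (s1 l)) m) (ity (\<Sum>l<n. of_bool (s2 l)) n)"
proof -
  define S1 where "S1 = (\<Sum>l<m. of_bool (s1 l) :: nat)"
  define S2 where "S2 = (\<Sum>l<n. of_bool (s2 l) :: nat)"
  have ub: "\<And>k. (\<exists>col y pm. ihom (msz m) (msz n) (\<lambda>a. odd S1 \<and> a = msz m - 1) (\<lambda>b. odd S2 \<and> b = msz n - 1) k col y pm)
     \<Longrightarrow> \<exists>c x pm. ihom m n s1 s2 k c x pm"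
    using UB[OF m n] unfolding S1_def S2_def by blast
  have m0: "0 < m" and n0: "0 < n" using m n by auto
  have l2: "\<And>k c x pm. ihom m n s1 s2 k c x pm \<Longrightarrow> k \<le> 1 \<Longrightarrow> False" using L2 m n0 by blast
  have l3m: "\<And>k c x pm. odd m \<Longrightarrow> ihom m n s1 s2 k c x pm \<Longrightarrow> k \<le> 2 \<Longrightarrow> False" using L3 n0 by blast
  have l3n: "\<And>k c x pm. odd n \<Longrightarrow> ihom m n s1 s2 k c x pm \<Longrightarrow> k \<le> 2 \<Longrightarrow> False"
  proof -
    fix k c x pm assume a: "odd n" "ihom m n s1 s2 k c x pm" "k \<le> 2"
    show False by (rule L3[OF ihom_transpose[OF a(2)] a(1) m0 a(3)])
  qed
  have l4n: "\<And>k c x pm. even n \<Longrightarrow> odd S2 \<Longrightarrow> ihom m n s1 s2 k c x pm \<Longrightarrow> k \<le> 3 \<Longrightarrow> False"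
    using L4 m0 n0 unfolding S2_def by blast
  have l4m: "\<And>k c x pm. even m \<Longrightarrow> odd S1 \<Longrightarrow> ihom m n s1 s2 k c x pm \<Longrightarrow> k \<le> 3 \<Longrightarrow> False"
  proof -
    fix k c x pm assume a: "even m" "odd S1" "ihom m n s1 s2 k c x pm" "k \<le> 3"
    show False by (rule L4[OF ihom_transpose[OF a(3)] n0 a(1) m0 a(2)[unfolded S1_def] a(4)])
  qed
  have l5: "\<And>k c x pm. odd (n * S1 + m * S2) \<Longrightarrow> ihom m n s1 s2 k c x pm \<Longrightarrow> k \<le> 4 \<Longrightarrow> False"
    using L5 m0 n0 unfolding S1_def S2_def by blast
  have cs1: "(LEAST k. (\<exists>c x pm. ihom m n s1 s2 k c x pm)) = 2" if "even m" "even S1" "even n" "even S2"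
  proof (rule least_eq)
    show "(\<exists>c x pm. ihom m n s1 s2 2 c x pm)" by (rule ub) (use base_4_False_4_False that in \<open>simp add: msz_def\<close>)
  next
    fix k assume "k < 2" "(\<exists>c x pm. ihom m n s1 s2 k c x pm)"
    then obtain c x pm where h: "ihom m n s1 s2 k c x pm" and kk: "k \<le> 1" by auto
    show False using l2[OF h] kk that kk by simp
  qed
  have cs2: "(LEAST k. (\<exists>c x pm. ihom m n s1 s2 k c x pm)) = 4" if "even m" "even S1" "even n" "odd S2"
  proof (rule least_eq)
    show "(\<exists>c x pm. ihom m n s1 s2 4 c x pm)" by (rule ub) (use base_4_False_4_True that in \<open>simp add: msz_def\<close>)
  next
    fix k assume "k < 4" "(\<exists>c x pm. ihom m n s1 s2 k c x pm)"
    then obtain c x pm where h: "ihom m n s1 s2 k c x pm" and kk: "k \<le> 3" by auto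
    show False using l4n[OF _ _ h] that kk by simp
  qed
  have cs3: "(LEAST k. (\<exists>c x pm. ihom m n s1 s2 k c x pm)) = 3" if "even m" "even S1" "odd n" "even S2"
  proof (rule least_eq)
    show "(\<exists>c x pm. ihom m n s1 s2 3 c x pm)" by (rule ub) (use base_4_False_3_False that in \<open>simp add: msz_def\<close>)
  next
    fix k assume "k < 3" "(\<exists>c x pm. ihom m n s1 s2 k c x pm)"
    then obtain c x pm where h: "ihom m n s1 s2 k c x pm" and kk: "k \<le> 2" by auto
    show False using l3n[OF _ h] that kk by simp
  qed
  have cs4: "(LEAST k. (\<exists>c x pm. ihom m n s1 s2 k c x pm)) = 3" if "even m" "even S1" "odd n" "odd S2"
  proof (rule least_eq)
    show "(\<exists>c x pm. ihom m n s1 s2 3 c x pm)" by (rule ub) (use base_4_False_3_True that in \<open>simp add: msz_def\<close>)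
  next
    fix k assume "k < 3" "(\<exists>c x pm. ihom m n s1 s2 k c x pm)"
    then obtain c x pm where h: "ihom m n s1 s2 k c x pm" and kk: "k \<le> 2" by auto
    show False using l3n[OF _ h] that kk by simp
  qed
  have cs5: "(LEAST k. (\<exists>c x pm. ihom m n s1 s2 k c x pm)) = 4" if "even m" "odd S1" "even n" "even S2"
  proof (rule least_eq)
    show "(\<exists>c x pm. ihom m n s1 s2 4 c x pm)" by (rule ub) (use base_4_True_4_False that in \<open>simp add: msz_def\<close>)
  next
    fix k assume "k < 4" "(\<exists>c x pm. ihom m n s1 s2 k c x pm)"
    then obtain c x pm where h: "ihom m n s1 s2 k c x pm" and kk: "k \<le> 3" by auto
    show False using l4m[OF _ _ h] that kk by simp
  qed
  have cs6: "(LEAST k. (\<exists>c x pm. ihom m n s1 s2 k c x pm)) = 4" if "even m" "odd S1" "even n" "odd S2"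
  proof (rule least_eq)
    show "(\<exists>c x pm. ihom m n s1 s2 4 c x pm)" by (rule ub) (use base_4_True_4_True that in \<open>simp add: msz_def\<close>)
  next
    fix k assume "k < 4" "(\<exists>c x pm. ihom m n s1 s2 k c x pm)"
    then obtain c x pm where h: "ihom m n s1 s2 k c x pm" and kk: "k \<le> 3" by auto
    show False using l4n[OF _ _ h] that kk by simp
  qed
  have cs7: "(LEAST k. (\<exists>c x pm. ihom m n s1 s2 k c x pm)) = 5" if "even m" "odd S1" "odd n" "even S2"
  proof (rule least_eq)
    show "(\<exists>c x pm. ihom m n s1 s2 5 c x pm)" by (rule ub) (use base_4_True_3_False that in \<open>simp add: msz_def\<close>)
  next
    fix k assume "k < 5" "(\<exists>c x pm. ihom m n s1 s2 k c x pm)"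
    then obtain c x pm where h: "ihom m n s1 s2 k c x pm" and kk: "k \<le> 4" by auto
    show False using l5[OF _ h] that kk by simp
  qed
  have cs8: "(LEAST k. (\<exists>c x pm. ihom m n s1 s2 k c x pm)) = 5" if "even m" "odd S1" "odd n" "odd S2"
  proof (rule least_eq)
    show "(\<exists>c x pm. ihom m n s1 s2 5 c x pm)" by (rule ub) (use base_4_True_3_True that in \<open>simp add: msz_def\<close>)
  next
    fix k assume "k < 5" "(\<exists>c x pm. ihom m n s1 s2 k c x pm)"
    then obtain c x pm where h: "ihom m n s1 s2 k c x pm" and kk: "k \<le> 4" by auto
    show False using l5[OF _ h] that kk by simp
  qed
  have cs9: "(LEAST k. (\<exists>c x pm. ihom m n s1 s2 k c x pm)) = 3" if "odd m" "even S1" "even n" "even S2"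
  proof (rule least_eq)
    show "(\<exists>c x pm. ihom m n s1 s2 3 c x pm)" by (rule ub) (use base_3_False_4_False that in \<open>simp add: msz_def\<close>)
  next
    fix k assume "k < 3" "(\<exists>c x pm. ihom m n s1 s2 k c x pm)"
    then obtain c x pm where h: "ihom m n s1 s2 k c x pm" and kk: "k \<le> 2" by auto
    show False using l3m[OF _ h] that kk by simp
  qed
  have cs10: "(LEAST k. (\<exists>c x pm. ihom m n s1 s2 k c x pm)) = 5" if "odd m" "even S1" "even n" "odd S2"
  proof (rule least_eq)
    show "(\<exists>c x pm. ihom m n s1 s2 5 c x pm)" by (rule ub) (use base_3_False_4_True that in \<open>simp add: msz_def\<close>)
  next
    fix k assume "k < 5" "(\<exists>c x pm. ihom m n s1 s2 k c x pm)"
    then obtain c x pm where h: "ihom m n s1 s2 k c x pm" and kk: "k \<le> 4" by auto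
    show False using l5[OF _ h] that kk by simp
  qed
  have cs11: "(LEAST k. (\<exists>c x pm. ihom m n s1 s2 k c x pm)) = 3" if "odd m" "even S1" "odd n" "even S2"
  proof (rule least_eq)
    show "(\<exists>c x pm. ihom m n s1 s2 3 c x pm)" by (rule ub) (use base_3_False_3_False that in \<open>simp add: msz_def\<close>)
  next
    fix k assume "k < 3" "(\<exists>c x pm. ihom m n s1 s2 k c x pm)"
    then obtain c x pm where h: "ihom m n s1 s2 k c x pm" and kk: "k \<le> 2" by auto
    show False using l3m[OF _ h] that kk by simp
  qed
  have cs12: "(LEAST k. (\<exists>c x pm. ihom m n s1 s2 k c x pm)) = 5" if "odd m" "even S1" "odd n" "odd S2"
  proof (rule least_eq)
    show "(\<exists>c x pm. ihom m n s1 s2 5 c x pm)" by (rule ub) (use base_3_False_3_True that in \<open>simp add: msz_def\<close>)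
  next
    fix k assume "k < 5" "(\<exists>c x pm. ihom m n s1 s2 k c x pm)"
    then obtain c x pm where h: "ihom m n s1 s2 k c x pm" and kk: "k \<le> 4" by auto
    show False using l5[OF _ h] that kk by simp
  qed
  have cs13: "(LEAST k. (\<exists>c x pm. ihom m n s1 s2 k c x pm)) = 3" if "odd m" "odd S1" "even n" "even S2"
  proof (rule least_eq)
    show "(\<exists>c x pm. ihom m n s1 s2 3 c x pm)" by (rule ub) (use base_3_True_4_False that in \<open>simp add: msz_def\<close>)
  next
    fix k assume "k < 3" "(\<exists>c x pm. ihom m n s1 s2 k c x pm)"
    then obtain c x pm where h: "ihom m n s1 s2 k c x pm" and kk: "k \<le> 2" by auto
    show False using l3m[OF _ h] that kk by simp
  qed
  have cs14: "(LEAST k. (\<exists>c x pm. ihom m n s1 s2 k c x pm)) = 5" if "odd m" "odd S1" "even n" "odd S2"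
  proof (rule least_eq)
    show "(\<exists>c x pm. ihom m n s1 s2 5 c x pm)" by (rule ub) (use base_3_True_4_True that in \<open>simp add: msz_def\<close>)
  next
    fix k assume "k < 5" "(\<exists>c x pm. ihom m n s1 s2 k c x pm)"
    then obtain c x pm where h: "ihom m n s1 s2 k c x pm" and kk: "k \<le> 4" by auto
    show False using l5[OF _ h] that kk by simp
  qed
  have cs15: "(LEAST k. (\<exists>c x pm. ihom m n s1 s2 k c x pm)) = 5" if "odd m" "odd S1" "odd n" "even S2"
  proof (rule least_eq)
    show "(\<exists>c x pm. ihom m n s1 s2 5 c x pm)" by (rule ub) (use base_3_True_3_False that in \<open>simp add: msz_def\<close>)
  next
    fix k assume "k < 5" "(\<exists>c x pm. ihom m n s1 s2 k c x pm)"
    then obtain c x pm where h: "ihom m n s1 s2 k c x pm" and kk: "k \<le> 4" by auto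
    show False using l5[OF _ h] that kk by simp
  qed
  have cs16: "(LEAST k. (\<exists>c x pm. ihom m n s1 s2 k c x pm)) = 3" if "odd m" "odd S1" "odd n" "odd S2"
  proof (rule least_eq)
    show "(\<exists>c x pm. ihom m n s1 s2 3 c x pm)" by (rule ub) (use base_3_True_3_True that in \<open>simp add: msz_def\<close>)
  next
    fix k assume "k < 3" "(\<exists>c x pm. ihom m n s1 s2 k c x pm)"
    then obtain c x pm where h: "ihom m n s1 s2 k c x pm" and kk: "k \<le> 2" by auto
    show False using l3m[OF _ h] that kk by simp
  qed
  show ?thesis unfolding S1_def[symmetric] S2_def[symmetric]
    by (cases "even m"; cases "even S1"; cases "even n"; cases "even S2") (simp_all add: ity_def cs1 cs2 cs3 cs4 cs5 cs6 cs7 cs8 cs9 cs10 cs11 cs12 cs13 cs14 cs15 cs16)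
qed

context psetup
begin

lemma chi_eq:
  "chi_s (prod_V V1 V2) (prod_E V1 E1 V2 E2) (prod_N V1 N1 V2 N2)
     = chi_table (ity (\<Sum>l<m. of_bool (s1 l)) m) (ity (\<Sum>l<n. of_bool (s2 l)) n)"
proof -
  have eq: "(\<exists>F M (\<phi> :: 'a \<times> 'b \<Rightarrow> nat). signed_graph {0..<k} F M \<and>
           signed_hom (prod_V V1 V2) (prod_E V1 E1 V2 E2) (prod_N V1 N1 V2 N2) {0..<k} F M \<phi>)
        = (\<exists>c x pm. ihom m n s1 s2 k c x pm)" for k
    using to_idx from_idx by blast
  have "chi_s (prod_V V1 V2) (prod_E V1 E1 V2 E2) (prod_N V1 N1 V2 N2) = (LEAST k. \<exists>c x pm. ihom m n s1 s2 k c x pm)"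
    unfolding chi_s_def eq ..
  also have "\<dots> = chi_table (ity (\<Sum>l<m. of_bool (s1 l)) m) (ity (\<Sum>l<n. of_bool (s2 l)) n)"
    by (rule idx_main[OF m3 n3])
  finally show ?thesis .
qed

end

theorem theorem6p2:
  fixes V1 :: "'a set" and E1 N1 :: "'a set set"
    and V2 :: "'b set" and E2 N2 :: "'b set set"
  assumes "signed_cycle V1 E1 N1" and "signed_cycle V2 E2 N2"
  shows "chi_s (prod_V V1 V2) (prod_E V1 E1 V2 E2) (prod_N V1 N1 V2 N2)
           = chi_table (cycle_type V1 N1) (cycle_type V2 N2)"
proof -
  obtain m f1 where m: "3 \<le> m" "bij_betw f1 {..<m} V1" "E1 = {{f1 i, f1 (Suc i mod m)} | i. i < m}" "N1 \<subseteq> E1"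
    using cyc_param[OF assms(1)] by blast
  obtain n f2 where n: "3 \<le> n" "bij_betw f2 {..<n} V2" "E2 = {{f2 i, f2 (Suc i mod n)} | i. i < n}" "N2 \<subseteq> E2"
    using cyc_param[OF assms(2)] by blast
  interpret P: psetup m n f1 f2 V1 E1 N1 V2 E2 N2
    using m n by unfold_locales auto
  have t1: "cycle_type V1 N1 = ity (\<Sum>l<m. of_bool (P.s1 l)) m"
    unfolding cycle_type_def ity_def P.s1_def card_N[OF m] bij_betw_same_card[OF m(2), symmetric] by simp
  have t2: "cycle_type V2 N2 = ity (\<Sum>l<n. of_bool (P.s2 l)) n"
    unfolding cycle_type_def ity_def P.s2_def card_N[OF n] bij_betw_same_card[OF n(2), symmetric] by simp
  show ?thesis unfolding t1 t2 by (rule P.chi_eq)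
qed


end
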